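(* Let $\mathcal{X}\subseteq\mathbb{R}^n$ and let $h = p_k \circ \dots \circ p_1:\mathbb{R}^n \to \mathcal{Y}$ be a model, where each layer $p_r:\mathbb{R}^{n^{r-1}}\to\mathbb{R}^{n^r}$ ($n^0=n$). Let $g:\mathbb{R}^n\times\mathcal{Y} \to G$ be an explanation function (EF). For $m\in\{1,\dots,k\}$ write $f_m := p_m \circ \dots \circ p_1$. Suppose that for some $i \in \{1,\dots,k\}$, $f_i$ is a $\beta(\epsilon)$-consistent representation with respect to $g$, for a function $\beta:(0,\infty)\to[0,\infty)$. Let $j$ with $i\le j\le k$, and assume that $p_r$ is an $l_r$-Lipschitz function for every $r \in \{i+1,\dots,j\}$. Then $f_j$ is $\hat{\beta}(\epsilon)$-consistent with respect to $g$, where $\hat{\beta}(\epsilon) := \beta(\epsilon) \cdot \prod^{j}_{r=i+1} l_r$.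
   Context: $G$ is a set of explanations equipped with a norm (or distance) written $|\cdot|$; the spaces $\mathbb{R}^{d}$ are also equipped with a norm $|\cdot|$, and Lipschitz continuity is with respect to these norms. For a model $h=c\circ f$ with representation $f:\mathcal{X}\to\mathbb{R}^d$ and an EF $g$, $f$ is called a $\beta(\epsilon)$-consistent representation with respect to $g$ if for every $\epsilon\in(0,\infty)$ and all $x_1,x_2\in\mathcal{X}$: $|g(x_1,h(x_1))-g(x_2,h(x_2))|\le\epsilon$ implies $|f(x_1)-f(x_2)|\le\beta(\epsilon)$. For the layered model, $f_m$ is regarded as the representation with $c=p_k\circ\dots\circ p_{m+1}$. *)

theory Defs
  imports "HOL-Analysis.Analysis"
begin

text \<open>Vectors of R^d are represented as functions nat => real vanishing outside {..<d}.\<close>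
definition vec_space :: "nat \<Rightarrow> (nat \<Rightarrow> real) set" where
  "vec_space d = {x. \<forall>i\<ge>d. x i = 0}"

definition is_norm_on :: "(nat \<Rightarrow> real) set \<Rightarrow> ((nat \<Rightarrow> real) \<Rightarrow> real) \<Rightarrow> bool" where
  "is_norm_on V nrm \<longleftrightarrow>
     (\<forall>x\<in>V. 0 \<le> nrm x \<and> (nrm x = 0 \<longleftrightarrow> (\<forall>t. x t = 0))) \<and>
     (\<forall>x\<in>V. \<forall>c::real. nrm (\<lambda>t. c * x t) = \<bar>c\<bar> * nrm x) \<and>
     (\<forall>x\<in>V. \<forall>y\<in>V. nrm (\<lambda>t. x t + y t) \<le> nrm x + nrm y)"

primrec comp_layers :: "(nat \<Rightarrow> 'a \<Rightarrow> 'a) \<Rightarrow> nat \<Rightarrow> 'a \<Rightarrow> 'a" where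
  "comp_layers p 0 = id"
| "comp_layers p (Suc m) = p (Suc m) \<circ> comp_layers p m"

definition lipschitz_between ::
  "(nat \<Rightarrow> real) set \<Rightarrow> ((nat \<Rightarrow> real) \<Rightarrow> real) \<Rightarrow> ((nat \<Rightarrow> real) \<Rightarrow> real)
   \<Rightarrow> real \<Rightarrow> ((nat \<Rightarrow> real) \<Rightarrow> (nat \<Rightarrow> real)) \<Rightarrow> bool" where
  "lipschitz_between A na nb l p \<longleftrightarrow>
     0 \<le> l \<and> (\<forall>x\<in>A. \<forall>y\<in>A. nb (\<lambda>t. p x t - p y t) \<le> l * na (\<lambda>t. x t - y t))"

definition consistent_repr ::
  "'x set \<Rightarrow> ('x \<Rightarrow> 'y \<Rightarrow> 'g) \<Rightarrow> ('x \<Rightarrow> 'y) \<Rightarrow> ('g \<Rightarrow> 'g \<Rightarrow> real)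
   \<Rightarrow> ((nat \<Rightarrow> real) \<Rightarrow> real) \<Rightarrow> ('x \<Rightarrow> nat \<Rightarrow> real) \<Rightarrow> (real \<Rightarrow> real) \<Rightarrow> bool" where
  "consistent_repr X g h dG nf f \<beta> \<longleftrightarrow>
     (\<forall>\<epsilon>>0. \<forall>x1\<in>X. \<forall>x2\<in>X.
        dG (g x1 (h x1)) (g x2 (h x2)) \<le> \<epsilon> \<longrightarrow> nf (\<lambda>t. f x1 t - f x2 t) \<le> \<beta> \<epsilon>)"

end

theory Submission
  imports Defs
begin

theorem theorem1:
  fixes X :: "(nat \<Rightarrow> real) set"
    and dims :: "nat \<Rightarrow> nat"
    and nrm :: "nat \<Rightarrow> (nat \<Rightarrow> real) \<Rightarrow> real"
    and p :: "nat \<Rightarrow> (nat \<Rightarrow> real) \<Rightarrow> (nat \<Rightarrow> real)"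
    and g :: "(nat \<Rightarrow> real) \<Rightarrow> (nat \<Rightarrow> real) \<Rightarrow> 'g"
    and dG :: "'g \<Rightarrow> 'g \<Rightarrow> real"
    and \<beta> :: "real \<Rightarrow> real"
    and l :: "nat \<Rightarrow> real"
    and n k i j :: nat
  assumes dim0: "dims 0 = n"
    and X_sub: "X \<subseteq> vec_space n"
    and norms: "\<And>d. is_norm_on (vec_space d) (nrm d)"
    and layers: "\<And>r. r \<in> {1..k} \<Longrightarrow> p r ` vec_space (dims (r - 1)) \<subseteq> vec_space (dims r)"
    and beta_nonneg: "\<And>\<epsilon>. \<epsilon> > 0 \<Longrightarrow> \<beta> \<epsilon> \<ge> 0"
    and i_range: "i \<in> {1..k}"
    and cons_i: "consistent_repr X g (comp_layers p k) dG (nrm (dims i)) (comp_layers p i) \<beta>"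
    and ij: "i \<le> j" "j \<le> k"
    and lip: "\<And>r. r \<in> {i+1..j} \<Longrightarrow>
               lipschitz_between (vec_space (dims (r - 1))) (nrm (dims (r - 1))) (nrm (dims r)) (l r) (p r)"
  shows "consistent_repr X g (comp_layers p k) dG (nrm (dims j)) (comp_layers p j)
           (\<lambda>\<epsilon>. \<beta> \<epsilon> * (\<Prod>r\<in>{i+1..j}. l r))"
proof -
  have inv: "\<And>m x. m \<le> k \<Longrightarrow> x \<in> X \<Longrightarrow> comp_layers p m x \<in> vec_space (dims m)"
  proof -
    fix m x assume "m \<le> k" "x \<in> X"
    then show "comp_layers p m x \<in> vec_space (dims m)"
    proof (induction m)
      case 0 then show ?case using X_sub dim0 by auto
    next
      case (Suc m)
      then have "comp_layers p m x \<in> vec_space (dims m)" by simp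
      moreover have "p (Suc m) ` vec_space (dims (Suc m - 1)) \<subseteq> vec_space (dims (Suc m))"
        using layers[of "Suc m"] Suc.prems by simp
      ultimately show ?case by auto
    qed
  qed
  have main: "\<And>m \<epsilon> x1 x2. i \<le> m \<Longrightarrow> m \<le> j \<Longrightarrow> \<epsilon> > 0 \<Longrightarrow> x1 \<in> X \<Longrightarrow> x2 \<in> X \<Longrightarrow>
      dG (g x1 (comp_layers p k x1)) (g x2 (comp_layers p k x2)) \<le> \<epsilon> \<Longrightarrow>
      nrm (dims m) (\<lambda>t. comp_layers p m x1 t - comp_layers p m x2 t) \<le> \<beta> \<epsilon> * (\<Prod>r\<in>{i+1..m}. l r)"
  proof -
    fix m \<epsilon> x1 x2 assume a: "i \<le> m" "m \<le> j" "\<epsilon> > 0" "x1 \<in> X" "x2 \<in> X"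
      "dG (g x1 (comp_layers p k x1)) (g x2 (comp_layers p k x2)) \<le> \<epsilon>"
    from a(1,2) show "nrm (dims m) (\<lambda>t. comp_layers p m x1 t - comp_layers p m x2 t) \<le> \<beta> \<epsilon> * (\<Prod>r\<in>{i+1..m}. l r)"
    proof (induction m rule: dec_induct)
      case base
      have "nrm (dims i) (\<lambda>t. comp_layers p i x1 t - comp_layers p i x2 t) \<le> \<beta> \<epsilon>"
        using cons_i a unfolding consistent_repr_def by blast
      then show ?case by simp
    next
      case (step m)
      have L: "lipschitz_between (vec_space (dims m)) (nrm (dims m)) (nrm (dims (Suc m))) (l (Suc m)) (p (Suc m))"
        using lip[of "Suc m"] step by simp
      have v1: "comp_layers p m x1 \<in> vec_space (dims m)" using inv a step ij by simp
      have v2: "comp_layers p m x2 \<in> vec_space (dims m)" using inv a step ij by simp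
      have l0: "0 \<le> l (Suc m)" using L unfolding lipschitz_between_def by simp
      have "nrm (dims (Suc m)) (\<lambda>t. comp_layers p (Suc m) x1 t - comp_layers p (Suc m) x2 t)
          \<le> l (Suc m) * nrm (dims m) (\<lambda>t. comp_layers p m x1 t - comp_layers p m x2 t)"
        using L v1 v2 unfolding lipschitz_between_def by simp
      also have "\<dots> \<le> l (Suc m) * (\<beta> \<epsilon> * (\<Prod>r\<in>{i+1..m}. l r))"
        using step l0 by (simp add: mult_left_mono)
      also have "\<dots> = \<beta> \<epsilon> * (\<Prod>r\<in>{i+1..Suc m}. l r)"
        using step by (simp add: prod.nat_ivl_Suc')
      finally show ?case .
    qed
  qed
  show ?thesis unfolding consistent_repr_def using main ij by blast
qed

end
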